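(* Let $N\ge 1$ and $p_0,p_1,\ldots,p_{N-1}\in\mathbb{N}$, let $k$ be a nonnegative integer and $x$ a nonnegative integer. Then $$\mathbf{d}_{p_0p_1\cdots p_{N-1}}(k,x)=\sum_{h=0}^{N-1}\mathbf{d}_{p_h}\!\left(k,\ \frac{x}{\left(\prod_{m=0}^{h-1}p_m\right)^{k+1}\left(\prod_{n=h+1}^{N-1}p_n\right)^{k}}\right)\prod_{j=0}^{h-1}p_j ,$$ where empty products equal $1$.
   Context: For an integer $p\ge 2$, an integer $k\ge 0$ and a real number $x\ge 0$, the digit function is $\mathbf{d}_p(k,x)=\lfloor x/p^k\rfloor-p\lfloor x/p^{k+1}\rfloor$ (for integer $x$ this is the $k$-th digit of $x$ in radix $p$); by convention $\mathbf{d}_1(k,x)=0$ for all $k,x$. *)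

theory Defs
  imports Complex_Main
begin

definition digit :: "nat \<Rightarrow> nat \<Rightarrow> real \<Rightarrow> int" where
  "digit p k x = (if p = 1 then 0
     else \<lfloor>x / real p ^ k\<rfloor> - int p * \<lfloor>x / real p ^ (k + 1)\<rfloor>)"

end

theory Submission
  imports Defs
begin

lemma digit_alt: "p \<ge> 1 \<Longrightarrow> digit p k y = \<lfloor>y / real p ^ k\<rfloor> - int p * \<lfloor>y / real p ^ (k + 1)\<rfloor>"
  unfolding digit_def by auto

lemma prod_split:
  fixes p :: "nat \<Rightarrow> nat"
  assumes "h < N"
  shows "(\<Prod>i<N. p i) = (\<Prod>m<h. p m) * p h * (\<Prod>n\<in>{h+1..<N}. p n)"
proof -
  have "(\<Prod>i<N. p i) = (\<Prod>i\<in>{0..<Suc h}. p i) * (\<Prod>n\<in>{Suc h..<N}. p n)"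
    using assms prod.atLeastLessThan_concat[of 0 "Suc h" N p] by (simp add: lessThan_atLeast0)
  also have "(\<Prod>i\<in>{0..<Suc h}. p i) = (\<Prod>m<h. p m) * p h"
    by (simp add: lessThan_atLeast0[symmetric])
  finally show ?thesis by simp
qed

theorem mainTheorem1:
  fixes N :: nat and p :: "nat \<Rightarrow> nat" and k :: nat and x :: nat
  assumes "N \<ge> 1"
    and "\<forall>i<N. p i \<ge> 1"
  shows "digit (\<Prod>i<N. p i) k (real x) =
    (\<Sum>h<N. digit (p h) k
        (real x / (real (\<Prod>m<h. p m) ^ (k + 1) * real (\<Prod>n\<in>{h+1..<N}. p n) ^ k))
      * int (\<Prod>j<h. p j))"
proof -
  define P where "P = (\<Prod>i<N. p i)"
  define Q where "Q = (\<lambda>h. \<Prod>m<h. p m)"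
  define z where "z = x div P ^ k"
  have Qpos: "Q h \<ge> 1" if "h \<le> N" for h
    unfolding Q_def
  proof (rule prod_ge_1)
    fix m assume "m \<in> {..<h}" then show "1 \<le> p m" using assms(2) that by auto
  qed
  have QN: "Q N = P" unfolding Q_def P_def by simp
  have Ppos: "P \<ge> 1" using Qpos[of N] QN by simp
  have QS: "Q (Suc h) = Q h * p h" for h unfolding Q_def by simp
  define f where "f = (\<lambda>h. int (Q h * (z div Q h)))"
  have termh: "digit (p h) k
        (real x / (real (\<Prod>m<h. p m) ^ (k + 1) * real (\<Prod>n\<in>{h+1..<N}. p n) ^ k))
      * int (\<Prod>j<h. p j) = f h - f (Suc h)" if h: "h < N" for h
  proof -
    define R where "R = (\<Prod>n\<in>{h+1..<N}. p n)"
    have PQ: "P = Q h * p h * R" unfolding P_def Q_def R_def using prod_split[OF h] by simp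
    have ph: "p h \<ge> 1" using assms(2) h by auto
    have Qh: "Q h \<ge> 1" using Qpos h by simp
    have R: "R \<ge> 1" using Ppos PQ by (metis less_one mult_is_0 not_le)
    have e1: "real x / (real (Q h) ^ (k + 1) * real R ^ k) / real (p h) ^ k
        = real x / real (P ^ k * Q h)"
      using ph Qh R unfolding PQ by (simp add: field_simps power_mult_distrib)
    have e2: "real x / (real (Q h) ^ (k + 1) * real R ^ k) / real (p h) ^ (k+1)
        = real x / real (P ^ k * Q (Suc h))"
      using ph Qh R unfolding PQ QS by (simp add: field_simps power_mult_distrib)
    have f1: "\<lfloor>real x / real (P ^ k * Q h)\<rfloor> = int (z div Q h)"
      unfolding z_def by (metis floor_divide_of_nat_eq div_mult2_eq)
    have f2: "\<lfloor>real x / real (P ^ k * Q (Suc h))\<rfloor> = int (z div Q (Suc h))"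
      unfolding z_def by (metis floor_divide_of_nat_eq div_mult2_eq)
    have "digit (p h) k (real x / (real (Q h) ^ (k + 1) * real R ^ k)) * int (Q h)
        = (int (z div Q h) - int (p h) * int (z div Q (Suc h))) * int (Q h)"
      by (simp only: digit_alt[OF ph] e1 e2 f1 f2)
    also have "\<dots> = f h - f (Suc h)" unfolding f_def QS by (simp add: algebra_simps)
    finally show ?thesis unfolding Q_def R_def by simp
  qed
  have "(\<Sum>h<N. digit (p h) k
        (real x / (real (\<Prod>m<h. p m) ^ (k + 1) * real (\<Prod>n\<in>{h+1..<N}. p n) ^ k))
      * int (\<Prod>j<h. p j)) = (\<Sum>h<N. f h - f (Suc h))"
    by (rule sum.cong) (simp_all only: termh lessThan_iff)
  also have "\<dots> = f 0 - f N" by (simp add: sum_lessThan_telescope')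
  also have "\<dots> = int z - int (P * (z div P))" unfolding f_def QN by (simp add: Q_def)
  also have "\<dots> = digit P k (real x)"
  proof -
    have a: "\<lfloor>real x / real P ^ k\<rfloor> = int z"
      unfolding z_def by (metis floor_divide_of_nat_eq of_nat_power)
    have b: "\<lfloor>real x / real P ^ (k+1)\<rfloor> = int (z div P)"
      unfolding z_def by (metis floor_divide_of_nat_eq of_nat_power div_mult2_eq power_Suc2 Suc_eq_plus1)
    show ?thesis by (simp only: digit_alt[OF Ppos] a b of_nat_mult)
  qed
  finally show ?thesis unfolding P_def by simp
qed

end
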